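(* Let $X$ be a finite simplicial complex, $d\ge0$, and $F:C_{d+1}(X)\to C_{d+1}(X)$ an arbitrary map. The system $\dot\theta=B_{d+1}F(B_{d+1}^\intercal\theta)$, seen as an ODE on $\operatorname{im}(B_{d+1})$, is conjugate to both systems on $\operatorname{im}(B_{d+1}^\intercal)$ $$\dot x=(B_{d+1}^\intercal B_{d+1})F(x)\quad\text{and}\quad\dot y=P_{d+1}F(B_{d+1}^\intercal B_{d+1}y).$$ Similarly, for an arbitrary map $H:C_{d-1}(X)\to C_{d-1}(X)$, the system $\dot\theta=B_d^\intercal H(B_d\theta)$, seen as an ODE on $\operatorname{im}(B_d^\intercal)$, is conjugate to both systems on $\operatorname{im}(B_d)$ $$\dot x=(B_dB_d^\intercal)H(x)\quad\text{and}\quad\dot y=Q_{d-1}H(B_dB_d^\intercal y).$$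
   Context: A finite simplicial complex $X$ on vertex set $\{1,\dots,n\}$ is a collection of nonempty subsets closed under taking nonempty subsets; $X_d$ is the set of simplices with $d+1$ vertices; a $d$-simplex with vertices $i_0<\dots<i_d$ is written $[i_0,\dots,i_d]$. $C_d(X)$ is the real vector space with basis $X_d$ and inner product making $X_d$ orthonormal ($C_{-1}(X)=0$). The boundary map is $\partial_d[i_0,\dots,i_d]=\sum_{k=0}^d(-1)^k[i_0,\dots,\widehat{i_k},\dots,i_d]$ with matrix $B_d$; $B_d^\intercal$ its transpose. $P_{d+1}$ is the orthogonal projection of $C_{d+1}(X)$ onto $\operatorname{im}(B_{d+1}^\intercal)$; $Q_{d-1}$ is the orthogonal projection of $C_{d-1}(X)$ onto $\operatorname{im}(B_d)$. ODEs $\dot u=A(u)$ on $U$ and $\dot v=C(v)$ on $V$ are conjugate if there is an invertible linear map $\Phi:U\to V$ with $\Phi\circ A=C\circ\Phi$. *)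

theory Defs
  imports Main "HOL-Analysis.Analysis"
begin

text \<open>We index chain groups by the NUMBER OF VERTICES k of their simplices:
  the paper's C_d(X) is chains X (d+1), so C_{-1}(X) = chains X 0 = {0}
  automatically, since X contains no empty simplex.
  A chain is a real function on vertex sets vanishing off the simplices of the
  given size (coefficients w.r.t. the orthonormal basis X_d).\<close>

definition simplicial_complex :: "nat \<Rightarrow> nat set set \<Rightarrow> bool" where
  "simplicial_complex n X \<longleftrightarrow>
     (\<forall>\<sigma>\<in>X. \<sigma> \<noteq> {} \<and> \<sigma> \<subseteq> {1..n}) \<and>
     (\<forall>\<sigma>\<in>X. \<forall>\<tau>. \<tau> \<noteq> {} \<and> \<tau> \<subseteq> \<sigma> \<longrightarrow> \<tau> \<in> X)"

text \<open>Simplices with exactly k vertices (the paper's X_{k-1}).\<close>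
definition simp :: "nat set set \<Rightarrow> nat \<Rightarrow> nat set set" where
  "simp X k = {\<sigma>\<in>X. card \<sigma> = k}"

definition chains :: "nat set set \<Rightarrow> nat \<Rightarrow> (nat set \<Rightarrow> real) set" where
  "chains X k = {c. \<forall>\<sigma>. \<sigma> \<notin> simp X k \<longrightarrow> c \<sigma> = 0}"

definition incidence :: "nat set \<Rightarrow> nat set \<Rightarrow> real" where
  "incidence \<tau> \<sigma> =
     (if \<tau> \<subseteq> \<sigma> \<and> card (\<sigma> - \<tau>) = 1
      then (-1) ^ card {u\<in>\<sigma>. u < (THE v. v \<in> \<sigma> - \<tau>)} else 0)"

text \<open>Boundary map on chains whose simplices have k vertices (paper: B_{k-1}).\<close>
definition bnd :: "nat set set \<Rightarrow> nat \<Rightarrow> (nat set \<Rightarrow> real) \<Rightarrow> (nat set \<Rightarrow> real)" where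
  "bnd X k c = (\<lambda>\<tau>. if \<tau> \<in> X \<and> Suc (card \<tau>) = k
                     then (\<Sum>\<sigma>\<in>simp X k. incidence \<tau> \<sigma> * c \<sigma>) else 0)"

text \<open>Transpose of bnd X k (matrix transpose in the orthonormal simplex bases).\<close>
definition cobnd :: "nat set set \<Rightarrow> nat \<Rightarrow> (nat set \<Rightarrow> real) \<Rightarrow> (nat set \<Rightarrow> real)" where
  "cobnd X k c = (\<lambda>\<sigma>. if \<sigma> \<in> X \<and> card \<sigma> = k
                     then (\<Sum>\<tau>\<in>{\<tau>\<in>X. Suc (card \<tau>) = k}. incidence \<tau> \<sigma> * c \<tau>) else 0)"

definition chain_inner :: "nat set set \<Rightarrow> nat \<Rightarrow> (nat set \<Rightarrow> real) \<Rightarrow> (nat set \<Rightarrow> real) \<Rightarrow> real" where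
  "chain_inner X k x y = (\<Sum>\<sigma>\<in>simp X k. x \<sigma> * y \<sigma>)"

definition orth_proj :: "nat set set \<Rightarrow> nat \<Rightarrow> (nat set \<Rightarrow> real) set \<Rightarrow> (nat set \<Rightarrow> real) \<Rightarrow> (nat set \<Rightarrow> real)" where
  "orth_proj X k W x = (THE p. p \<in> W \<and> (\<forall>w\<in>W. chain_inner X k (\<lambda>\<sigma>. x \<sigma> - p \<sigma>) w = 0))"

definition conjugate ::
  "(nat set \<Rightarrow> real) set \<Rightarrow> ((nat set \<Rightarrow> real) \<Rightarrow> (nat set \<Rightarrow> real)) \<Rightarrow>
   (nat set \<Rightarrow> real) set \<Rightarrow> ((nat set \<Rightarrow> real) \<Rightarrow> (nat set \<Rightarrow> real)) \<Rightarrow> bool" where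
  "conjugate U A V C \<longleftrightarrow>
     (\<exists>\<Phi>. bij_betw \<Phi> U V \<and>
          (\<forall>x\<in>U. \<forall>y\<in>U. \<Phi> (\<lambda>\<sigma>. x \<sigma> + y \<sigma>) = (\<lambda>\<sigma>. \<Phi> x \<sigma> + \<Phi> y \<sigma>)) \<and>
          (\<forall>a. \<forall>x\<in>U. \<Phi> (\<lambda>\<sigma>. a * x \<sigma>) = (\<lambda>\<sigma>. a * \<Phi> x \<sigma>)) \<and>
          (\<forall>u\<in>U. \<Phi> (A u) = C (\<Phi> u)))"

end

theory Submission
  imports Defs "HOL-Library.Function_Algebras"
begin

definition fsc :: "real \<Rightarrow> (nat set \<Rightarrow> real) \<Rightarrow> (nat set \<Rightarrow> real)" where
  "fsc a f = (\<lambda>\<sigma>. a * f \<sigma>)"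

interpretation fv: vector_space fsc
  by unfold_locales (auto simp: fsc_def fun_eq_iff algebra_simps)

lemma fin_inj_endo_surj:
  assumes W: "fv.subspace W" and G: "W \<subseteq> fv.span G" "finite G"
    and lin: "Vector_Spaces.linear fsc fsc f" and fW: "f ` W \<subseteq> W" and inj: "inj_on f W"
  shows "f ` W = W"
proof -
  interpret lf: Vector_Spaces.linear fsc fsc f by fact
  obtain B where B: "B \<subseteq> W" "fv.independent B" "W \<subseteq> fv.span B" "card B = fv.dim W"
    using fv.basis_exists[of W] by metis
  have spB: "fv.span B = W"
    using B W by (simp add: fv.span_subspace)
  have finB: "finite B"
    using fv.independent_span_bound[OF G(2) B(2)] B(1) G(1) by blast
  have indf: "fv.independent (f ` B)"
    using lf.dependent_inj_imageD[of B] B(2) inj spB by auto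
  have cardf: "card (f ` B) = card B"
    using card_image inj_on_subset[OF inj B(1)] by blast
  have fBW: "f ` B \<subseteq> W" using B(1) fW by blast
  have "W \<subseteq> fv.span (f ` B)"
  proof
    fix w assume w: "w \<in> W"
    show "w \<in> fv.span (f ` B)"
    proof (rule ccontr)
      assume nw: "w \<notin> fv.span (f ` B)"
      then have wn: "w \<notin> f ` B" using fv.span_base by blast
      have "fv.independent (insert w (f ` B))"
        using fv.independent_insert indf nw wn by auto
      moreover have "insert w (f ` B) \<subseteq> fv.span B"
        using spB w fBW by auto
      ultimately have "card (insert w (f ` B)) \<le> card B"
        using fv.independent_span_bound[OF finB] by blast
      moreover have "card (insert w (f ` B)) = card B + 1"
        using wn cardf finB by simp
      ultimately show False by simp
    qed
  qed
  then have "W \<subseteq> f ` W"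
    using lf.span_image[of B] spB by simp
  then show ?thesis using fW by blast
qed


locale adjsetup =
  fixes S T :: "(nat set \<Rightarrow> real) set"
    and iS iT :: "(nat set \<Rightarrow> real) \<Rightarrow> (nat set \<Rightarrow> real) \<Rightarrow> real"
    and A At :: "(nat set \<Rightarrow> real) \<Rightarrow> (nat set \<Rightarrow> real)"
    and GS GT :: "(nat set \<Rightarrow> real) set"
  assumes AT: "\<And>x. A x \<in> T" and AtS: "\<And>y. At y \<in> S"
    and linA: "Vector_Spaces.linear fsc fsc A" and linAt: "Vector_Spaces.linear fsc fsc At"
    and adj: "\<And>x y. iT (A x) y = iS x (At y)"
    and iSsym: "\<And>x y. iS x y = iS y x" and iTsym: "\<And>x y. iT x y = iT y x"
    and iSdiff: "\<And>x y z. iS (x - y) z = iS x z - iS y z"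
    and iTdiff: "\<And>x y z. iT (x - y) z = iT x z - iT y z"
    and iSpd: "\<And>x. x \<in> S \<Longrightarrow> iS x x = 0 \<Longrightarrow> x = 0"
    and iTpd: "\<And>x. x \<in> T \<Longrightarrow> iT x x = 0 \<Longrightarrow> x = 0"
    and Ssub: "fv.subspace S" and Tsub: "fv.subspace T"
    and Sfin: "S \<subseteq> fv.span GS" "finite GS"
    and Tfin: "T \<subseteq> fv.span GT" "finite GT"
begin

interpretation lA: Vector_Spaces.linear fsc fsc A by (rule linA)
interpretation lAt: Vector_Spaces.linear fsc fsc At by (rule linAt)

lemma iS0: "iS 0 z = 0" using iSdiff[of 0 0 z] by simp
lemma iT0: "iT 0 z = 0" using iTdiff[of 0 0 z] by simp
lemma iS0': "iS z 0 = 0" using iS0 iSsym by metis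

lemma adj_sw: "iS (At x) y = iT x (A y)"
  using adj[of y x] iSsym iTsym by metis

lemma swap: "adjsetup T S iT iS At A GT GS"
  by unfold_locales (rule AtS AT linAt linA adj_sw iTsym iSsym iTdiff iSdiff iTpd iSpd Tsub Ssub Tfin Sfin; assumption?)+

lemma inj_At: "inj_on At (A ` S)"
proof -
  have sub: "fv.subspace (A ` S)" using lA.subspace_image[OF Ssub] .
  show ?thesis unfolding lAt.inj_on_iff_eq_0[OF sub]
  proof safe
    fix s assume s: "s \<in> S" and z: "At (A s) = 0"
    have "iT (A s) (A s) = 0" using adj[of s "A s"] z iS0' by simp
    then show "A s = 0" using iTpd AT by blast
  qed
qed

lemma surj_At: "At ` (A ` S) = At ` T"
proof -
  let ?W = "At ` T"
  have sub: "fv.subspace ?W" using lAt.subspace_image[OF Tsub] .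
  have WS: "?W \<subseteq> S" using AtS by blast
  have lin: "Vector_Spaces.linear fsc fsc (At \<circ> A)"
    using Vector_Spaces.linear_compose[OF linA linAt] .
  interpret lM: Vector_Spaces.linear fsc fsc "At \<circ> A" by (rule lin)
  have inj: "inj_on (At \<circ> A) ?W"
    unfolding lM.inj_on_iff_eq_0[OF sub]
  proof safe
    fix t assume t: "t \<in> T" and z: "(At \<circ> A) (At t) = 0"
    have "iT (A (At t)) (A (At t)) = 0" using adj[of "At t" "A (At t)"] z iS0' by simp
    then have "A (At t) = 0" using iTpd AT by blast
    then have "iS (At t) (At t) = 0" using adj[of "At t" t] iT0 iSsym by simp
    then show "At t = 0" using iSpd AtS by blast
  qed
  have "(At \<circ> A) ` ?W = ?W"
    by (rule fin_inj_endo_surj[OF sub _ Sfin(2) lin _ inj]) (use WS Sfin(1) AT in auto)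
  have "?W \<subseteq> At ` (A ` S)"
  proof
    fix y assume "y \<in> ?W"
    then have "y \<in> (At \<circ> A) ` ?W" using \<open>(At \<circ> A) ` ?W = ?W\<close> by simp
    then obtain w where "w \<in> ?W" "y = At (A w)" by auto
    then show "y \<in> At ` (A ` S)" using WS by blast
  qed
  moreover have "At ` (A ` S) \<subseteq> ?W" using AT by blast
  ultimately show ?thesis by blast
qed

lemma pl: "(\<lambda>\<sigma>. x \<sigma> + y \<sigma>) = x + y" by (simp add: fun_eq_iff)
lemma scl: "(\<lambda>\<sigma>. a * x \<sigma>) = fsc a x" by (simp add: fsc_def)

lemma conj1: "conjugate (A ` S) (\<lambda>\<theta>. A (F (At \<theta>))) (At ` T) (\<lambda>x. At (A (F x)))"
  unfolding conjugate_def
proof (intro exI[of _ At] conjI ballI allI)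
  show "bij_betw At (A ` S) (At ` T)" using inj_At surj_At by (simp add: bij_betw_def)
next
  fix x y assume "x \<in> A ` S" "y \<in> A ` S"
  show "At (\<lambda>\<sigma>. x \<sigma> + y \<sigma>) = (\<lambda>\<sigma>. At x \<sigma> + At y \<sigma>)"
    unfolding pl[of x y] pl[of "At x" "At y"] by (rule lAt.add)
next
  fix a x assume "x \<in> A ` S"
  show "At (\<lambda>\<sigma>. a * x \<sigma>) = (\<lambda>\<sigma>. a * At x \<sigma>)"
    unfolding scl[of a x] scl[of a "At x"] by (rule lAt.scale)
qed simp

lemma conj2:
  assumes F: "\<forall>x\<in>S. F x \<in> S"
  shows "conjugate (A ` S) (\<lambda>\<theta>. A (F (At \<theta>))) (At ` T)
     (\<lambda>y. THE p. p \<in> At ` T \<and> (\<forall>w\<in>At ` T. iS (\<lambda>\<sigma>. F (At (A y)) \<sigma> - p \<sigma>) w = 0))"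
proof -
  let ?U = "A ` S" and ?V = "At ` T"
  define \<Psi> where "\<Psi> = inv_into ?V A"
  have injA: "inj_on A ?V" using adjsetup.inj_At[OF swap] .
  have surjA: "A ` ?V = ?U" using adjsetup.surj_At[OF swap] .
  have bijA: "bij_betw A ?V ?U" using injA surjA by (simp add: bij_betw_def)
  have bij: "bij_betw \<Psi> ?U ?V" unfolding \<Psi>_def by (rule bij_betw_inv_into[OF bijA])
  have subV: "fv.subspace ?V" using lAt.subspace_image[OF Tsub] .
  have VS: "?V \<subseteq> S" using AtS by blast
  have PsiV: "\<Psi> x \<in> ?V" if "x \<in> ?U" for x using bij that by (rule bij_betw_apply)
  have APsi: "A (\<Psi> x) = x" if "x \<in> ?U" for x
    unfolding \<Psi>_def using f_inv_into_f[of x A ?V] that surjA by simp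
  have PsiA: "\<Psi> (A v) = v" if "v \<in> ?V" for v
    unfolding \<Psi>_def using that injA by (simp add: inv_into_f_f)
  have add: "\<Psi> (x + y) = \<Psi> x + \<Psi> y" if "x \<in> ?U" "y \<in> ?U" for x y
  proof -
    have m: "\<Psi> x + \<Psi> y \<in> ?V" by (rule fv.subspace_add[OF subV PsiV[OF that(1)] PsiV[OF that(2)]])
    have e: "A (\<Psi> x + \<Psi> y) = x + y" using APsi that lA.add by simp
    show ?thesis using PsiA[OF m] e by simp
  qed
  have sc: "\<Psi> (fsc a x) = fsc a (\<Psi> x)" if "x \<in> ?U" for a x
  proof -
    have m: "fsc a (\<Psi> x) \<in> ?V" by (rule fv.subspace_scale[OF subV PsiV[OF that]])
    have e: "A (fsc a (\<Psi> x)) = fsc a x" using APsi that lA.scale by simp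
    show ?thesis using PsiA[OF m] e by simp
  qed
  have proj: "(THE p. p \<in> ?V \<and> (\<forall>w\<in>?V. iS (\<lambda>\<sigma>. z \<sigma> - p \<sigma>) w = 0)) = p0"
    if z: "z \<in> S" and p0: "p0 \<in> ?V" "A p0 = A z" for z p0
  proof -
    have mi: "\<And>q. (\<lambda>\<sigma>. z \<sigma> - q \<sigma>) = z - q" by (simp add: fun_eq_iff)
    have Az: "A (z - p0) = 0" using lA.diff[of z p0] p0(2) by simp
    have h0: "\<forall>w\<in>?V. iS (z - p0) w = 0"
    proof
      fix w assume "w \<in> ?V"
      then obtain t where "w = At t" by blast
      then show "iS (z - p0) w = 0" using adj[of "z - p0" t] Az iT0 by metis
    qed
    show ?thesis unfolding mi
    proof (rule the_equality)
      show "p0 \<in> ?V \<and> (\<forall>w\<in>?V. iS (z - p0) w = 0)" using p0(1) h0 by blast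
    next
      fix q assume q: "q \<in> ?V \<and> (\<forall>w\<in>?V. iS (z - q) w = 0)"
      have qp: "q - p0 \<in> ?V" using fv.subspace_diff[OF subV _ p0(1), of q] q by blast
      have e: "(z - p0) - (z - q) = q - p0" by simp
      have "iS (q - p0) (q - p0) = iS (z - p0) (q - p0) - iS (z - q) (q - p0)"
        using iSdiff[of "z - p0" "z - q" "q - p0"] unfolding e .
      also have "\<dots> = 0"
      proof -
        have "iS (z - p0) (q - p0) = 0" using h0 qp by blast
        moreover have "iS (z - q) (q - p0) = 0" using q qp by blast
        ultimately show ?thesis by simp
      qed
      finally have "q - p0 = 0" using iSpd qp VS by blast
      then show "q = p0" by simp
    qed
  qed
  show ?thesis
    unfolding conjugate_def
  proof (intro exI[of _ \<Psi>] conjI ballI allI)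
    show "bij_betw \<Psi> ?U ?V" by (rule bij)
  next
    fix x y assume "x \<in> ?U" "y \<in> ?U"
    then show "\<Psi> (\<lambda>\<sigma>. x \<sigma> + y \<sigma>) = (\<lambda>\<sigma>. \<Psi> x \<sigma> + \<Psi> y \<sigma>)"
      unfolding pl[of x y] pl[of "\<Psi> x" "\<Psi> y"] by (rule add)
  next
    fix a x assume "x \<in> ?U"
    then show "\<Psi> (\<lambda>\<sigma>. a * x \<sigma>) = (\<lambda>\<sigma>. a * \<Psi> x \<sigma>)"
      unfolding scl[of a x] scl[of a "\<Psi> x"] by (rule sc)
  next
    fix u assume u: "u \<in> ?U"
    define z where "z = F (At u)"
    have zS: "z \<in> S" using F AtS z_def by blast
    have "A z \<in> A ` ?V" using surjA zS by simp
    then obtain p0 where p0a: "A z = A p0" and p0b: "p0 \<in> ?V" by (rule imageE)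
    have p0: "p0 \<in> ?V" "A p0 = A z" using p0a p0b by simp_all
    have "\<Psi> (A (F (At u))) = p0" using PsiA[OF p0(1)] p0(2) z_def by simp
    moreover have "(THE p. p \<in> ?V \<and> (\<forall>w\<in>?V. iS (\<lambda>\<sigma>. F (At (A (\<Psi> u))) \<sigma> - p \<sigma>) w = 0)) = p0"
      using proj[OF zS p0] APsi[OF u] z_def by simp
    ultimately show "\<Psi> (A (F (At u))) =
      (THE p. p \<in> ?V \<and> (\<forall>w\<in>?V. iS (\<lambda>\<sigma>. F (At (A (\<Psi> u))) \<sigma> - p \<sigma>) w = 0))" by simp
  qed
qed

end


lemma vs_fsc: "vector_space fsc"
  by unfold_locales (auto simp: fsc_def fun_eq_iff algebra_simps)

lemma finite_X: "simplicial_complex n X \<Longrightarrow> finite X"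
  unfolding simplicial_complex_def
  by (rule finite_subset[of X "Pow {1..n}"]) auto

lemma finite_simp: "finite X \<Longrightarrow> finite (simp X k)"
  unfolding simp_def by simp

lemma bnd_chain: "k = Suc j \<Longrightarrow> bnd X k x \<in> chains X j"
  by (auto simp: bnd_def chains_def simp_def)

lemma cobnd_chain: "cobnd X k y \<in> chains X k"
  by (auto simp: cobnd_def chains_def simp_def)

lemma lin_bnd: "Vector_Spaces.linear fsc fsc (bnd X k)"
  unfolding Vector_Spaces.linear_iff using vs_fsc
  by (auto simp: bnd_def fsc_def fun_eq_iff sum.distrib distrib_left distrib_right
      sum_distrib_left mult.assoc mult.left_commute)

lemma lin_cobnd: "Vector_Spaces.linear fsc fsc (cobnd X k)"
  unfolding Vector_Spaces.linear_iff using vs_fsc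
  by (auto simp: cobnd_def fsc_def fun_eq_iff sum.distrib distrib_left distrib_right
      sum_distrib_left mult.assoc mult.left_commute)

lemma adj_concrete:
  assumes k: "k = Suc j"
  shows "chain_inner X j (bnd X k x) y = chain_inner X k x (cobnd X k y)"
proof -
  have e: "{\<tau>\<in>X. Suc (card \<tau>) = k} = simp X j" using k by (auto simp: simp_def)
  have "chain_inner X j (bnd X k x) y
      = (\<Sum>\<tau>\<in>simp X j. \<Sum>\<sigma>\<in>simp X k. incidence \<tau> \<sigma> * x \<sigma> * y \<tau>)"
    unfolding chain_inner_def bnd_def
    by (intro sum.cong refl) (auto simp: simp_def k sum_distrib_right)
  also have "\<dots> = (\<Sum>\<sigma>\<in>simp X k. \<Sum>\<tau>\<in>simp X j. incidence \<tau> \<sigma> * x \<sigma> * y \<tau>)"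
    by (rule sum.swap)
  also have "\<dots> = chain_inner X k x (cobnd X k y)"
    unfolding chain_inner_def cobnd_def e
    by (intro sum.cong refl) (auto simp: simp_def sum_distrib_left mult_ac)
  finally show ?thesis .
qed

lemma ci_sym: "chain_inner X k x y = chain_inner X k y x"
  unfolding chain_inner_def by (simp add: mult.commute)

lemma ci_diff: "chain_inner X k (x - y) z = chain_inner X k x z - chain_inner X k y z"
  unfolding chain_inner_def by (simp add: left_diff_distrib sum_subtractf)

lemma ci_pd:
  assumes fin: "finite X" and x: "x \<in> chains X k" and z: "chain_inner X k x x = 0"
  shows "x = 0"
proof -
  have "\<forall>\<sigma>\<in>simp X k. x \<sigma> * x \<sigma> = 0"
    using z finite_simp[OF fin] unfolding chain_inner_def
    by (subst (asm) sum_nonneg_eq_0_iff) auto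
  then show ?thesis using x by (auto simp: chains_def fun_eq_iff)
qed

lemma chains_sub: "fv.subspace (chains X k)"
  unfolding fv.subspace_def by (auto simp: chains_def fsc_def)

lemma sum_fun_apply: "(sum f A) \<tau> = (\<Sum>a\<in>A. f a \<tau>)"
proof (cases "finite A")
  case True then show ?thesis by (induction rule: finite_induct) auto
qed simp

lemma chains_span:
  assumes fin: "finite X"
  shows "chains X k \<subseteq> fv.span ((\<lambda>\<sigma> \<tau>. if \<tau> = \<sigma> then 1 else 0) ` simp X k)"
proof
  fix x assume x: "x \<in> chains X k"
  let ?\<delta> = "\<lambda>\<sigma> \<tau>. if \<tau> = \<sigma> then (1::real) else 0"
  have "x = (\<Sum>\<sigma>\<in>simp X k. fsc (x \<sigma>) (?\<delta> \<sigma>))"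
  proof (rule ext)
    fix \<tau>
    have "(\<Sum>\<sigma>\<in>simp X k. fsc (x \<sigma>) (?\<delta> \<sigma>)) \<tau> = (\<Sum>\<sigma>\<in>simp X k. if \<tau> = \<sigma> then x \<sigma> else 0)"
      unfolding sum_fun_apply by (intro sum.cong refl) (simp add: fsc_def)
    also have "\<dots> = x \<tau>" using x finite_simp[OF fin] by (simp add: chains_def)
    finally show "x \<tau> = (\<Sum>\<sigma>\<in>simp X k. fsc (x \<sigma>) (?\<delta> \<sigma>)) \<tau>" by simp
  qed
  also have "\<dots> \<in> fv.span (?\<delta> ` simp X k)"
    by (intro fv.span_sum fv.span_scale fv.span_base) auto
  finally show "x \<in> fv.span (?\<delta> ` simp X k)" .
qed

lemma setup1:
  assumes fin: "finite X" and k: "k = Suc j"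
  shows "adjsetup (chains X k) (chains X j) (chain_inner X k) (chain_inner X j) (bnd X k) (cobnd X k)
     ((\<lambda>\<sigma> \<tau>. if \<tau> = \<sigma> then 1 else 0) ` simp X k) ((\<lambda>\<sigma> \<tau>. if \<tau> = \<sigma> then 1 else 0) ` simp X j)"
  by (rule adjsetup.intro) (auto simp: bnd_chain[OF k] cobnd_chain lin_bnd lin_cobnd adj_concrete[OF k]
      ci_diff chains_sub chains_span[OF fin] finite_simp[OF fin] intro: ci_sym ci_pd[OF fin])


theorem mainTheorem10:
  fixes n d :: nat and X :: "nat set set"
    and F H :: "(nat set \<Rightarrow> real) \<Rightarrow> (nat set \<Rightarrow> real)"
  assumes X: "simplicial_complex n X"
    and F: "\<forall>x\<in>chains X (d+2). F x \<in> chains X (d+2)"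
    and H: "\<forall>x\<in>chains X d. H x \<in> chains X d"
  shows
    "conjugate (bnd X (d+2) ` chains X (d+2)) (\<lambda>\<theta>. bnd X (d+2) (F (cobnd X (d+2) \<theta>)))
               (cobnd X (d+2) ` chains X (d+1)) (\<lambda>x. cobnd X (d+2) (bnd X (d+2) (F x)))
   \<and> conjugate (bnd X (d+2) ` chains X (d+2)) (\<lambda>\<theta>. bnd X (d+2) (F (cobnd X (d+2) \<theta>)))
               (cobnd X (d+2) ` chains X (d+1))
               (\<lambda>y. orth_proj X (d+2) (cobnd X (d+2) ` chains X (d+1))
                      (F (cobnd X (d+2) (bnd X (d+2) y))))
   \<and> conjugate (cobnd X (d+1) ` chains X d) (\<lambda>\<theta>. cobnd X (d+1) (H (bnd X (d+1) \<theta>)))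
               (bnd X (d+1) ` chains X (d+1)) (\<lambda>x. bnd X (d+1) (cobnd X (d+1) (H x)))
   \<and> conjugate (cobnd X (d+1) ` chains X d) (\<lambda>\<theta>. cobnd X (d+1) (H (bnd X (d+1) \<theta>)))
               (bnd X (d+1) ` chains X (d+1))
               (\<lambda>y. orth_proj X d (bnd X (d+1) ` chains X (d+1))
                      (H (bnd X (d+1) (cobnd X (d+1) y))))"
proof -
  have fin: "finite X" using finite_X[OF X] .
  have s1: "adjsetup (chains X (d+2)) (chains X (d+1)) (chain_inner X (d+2)) (chain_inner X (d+1))
      (bnd X (d+2)) (cobnd X (d+2))
     ((\<lambda>\<sigma> \<tau>. if \<tau> = \<sigma> then 1 else 0) ` simp X (d+2)) ((\<lambda>\<sigma> \<tau>. if \<tau> = \<sigma> then 1 else 0) ` simp X (d+1))"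
    by (rule setup1[OF fin]) simp
  have s2: "adjsetup (chains X d) (chains X (d+1)) (chain_inner X d) (chain_inner X (d+1))
      (cobnd X (d+1)) (bnd X (d+1))
     ((\<lambda>\<sigma> \<tau>. if \<tau> = \<sigma> then 1 else 0) ` simp X d) ((\<lambda>\<sigma> \<tau>. if \<tau> = \<sigma> then 1 else 0) ` simp X (d+1))"
    by (rule adjsetup.swap, rule setup1[OF fin]) simp
  show ?thesis
    unfolding orth_proj_def
    using adjsetup.conj1[OF s1, of F] adjsetup.conj2[OF s1 F]
      adjsetup.conj1[OF s2, of H] adjsetup.conj2[OF s2 H]
    by blast
qed

end
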